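(* Let $K$ be a totally real number field of degree $n$, $\Gamma=\mathbf{SL}_2(\mathcal O_K)$, $1\le m\le n$ and $\mathcal I=\{1,\dots,m\}$. Let $F_1,\dots,F_{m+1}$ be Hilbert modular forms for $\Gamma$ of $\mathcal I$-parallel weights $r_1,\dots,r_{m+1}$ respectively. Then $$\langle F_1,\dots,F_{m+1}\rangle_{\underline 1}:=\det\begin{pmatrix} r_1F_1&\cdots&r_{m+1}F_{m+1}\\ \partial F_1/\partial z_1&\cdots&\partial F_{m+1}/\partial z_1\\ \vdots&&\vdots\\ \partial F_1/\partial z_m&\cdots&\partial F_{m+1}/\partial z_m\end{pmatrix}$$ is a Hilbert modular form for $\Gamma$ of $\mathcal I$-parallel weight $r_1+\dots+r_{m+1}+2$.
   Context: $\mathcal O_K$ is principal. With real embeddings $\sigma_i$, a Hilbert modular form of weight $\underline f=(f_1,\dots,f_n)$ is a holomorphic $F:\mathcal H^n\to\mathbb C$ with $F(\gamma\underline z)=\prod_i(\sigma_i(c)z_i+\sigma_i(d))^{f_i}F(\underline z)$ for all $\gamma\in\Gamma$, where $\gamma\underline z=(\frac{\sigma_i(a)z_i+\sigma_i(b)}{\sigma_i(c)z_i+\sigma_i(d)})_i$. It has $\mathcal I$-parallel weight $f$ if $f_i=f$ for all $i\in\mathcal I$. *)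

theory Defs
  imports "HOL-Analysis.Derivative" "HOL-Computational_Algebra.Polynomial" "Jordan_Normal_Form.Determinant"
begin

definition is_subfield :: "complex set \<Rightarrow> bool" where
  "is_subfield K \<longleftrightarrow> 0 \<in> K \<and> 1 \<in> K \<and>
     (\<forall>x\<in>K. \<forall>y\<in>K. x + y \<in> K \<and> x * y \<in> K) \<and>
     (\<forall>x\<in>K. - x \<in> K \<and> inverse x \<in> K)"

definition is_Q_basis :: "complex set \<Rightarrow> nat \<Rightarrow> (nat \<Rightarrow> complex) \<Rightarrow> bool" where
  "is_Q_basis K n b \<longleftrightarrow> (\<forall>i\<in>{1..n}. b i \<in> K) \<and>
     (\<forall>x\<in>K. \<exists>q::nat \<Rightarrow> rat. x = (\<Sum>i=1..n. of_rat (q i) * b i)) \<and>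
     (\<forall>q::nat \<Rightarrow> rat. (\<Sum>i=1..n. of_rat (q i) * b i) = 0 \<longrightarrow> (\<forall>i\<in>{1..n}. q i = 0))"

definition number_field_of_degree :: "complex set \<Rightarrow> nat \<Rightarrow> bool" where
  "number_field_of_degree K n \<longleftrightarrow> is_subfield K \<and> (\<exists>b. is_Q_basis K n b)"

text \<open>A field embedding of K into C (only its values on K matter).\<close>
definition is_embedding :: "complex set \<Rightarrow> (complex \<Rightarrow> complex) \<Rightarrow> bool" where
  "is_embedding K \<sigma> \<longleftrightarrow> \<sigma> 1 = 1 \<and>
     (\<forall>x\<in>K. \<forall>y\<in>K. \<sigma> (x + y) = \<sigma> x + \<sigma> y \<and> \<sigma> (x * y) = \<sigma> x * \<sigma> y)"

definition totally_real :: "complex set \<Rightarrow> bool" where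
  "totally_real K \<longleftrightarrow> (\<forall>\<sigma>. is_embedding K \<sigma> \<longrightarrow> (\<forall>x\<in>K. \<sigma> x \<in> \<real>))"

definition enumerates_embeddings :: "complex set \<Rightarrow> nat \<Rightarrow> (nat \<Rightarrow> complex \<Rightarrow> complex) \<Rightarrow> bool" where
  "enumerates_embeddings K n \<sigma> \<longleftrightarrow> (\<forall>i\<in>{1..n}. is_embedding K (\<sigma> i)) \<and>
     (\<forall>\<tau>. is_embedding K \<tau> \<longrightarrow> (\<exists>!i. i \<in> {1..n} \<and> (\<forall>x\<in>K. \<sigma> i x = \<tau> x)))"

definition algebraic_integer :: "complex \<Rightarrow> bool" where
  "algebraic_integer x \<longleftrightarrow> (\<exists>p :: int poly. lead_coeff p = 1 \<and> poly (map_poly of_int p) x = 0)"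

definition ring_of_integers :: "complex set \<Rightarrow> complex set" where
  "ring_of_integers K = {x \<in> K. algebraic_integer x}"

definition is_ideal_of :: "complex set \<Rightarrow> complex set \<Rightarrow> bool" where
  "is_ideal_of R I \<longleftrightarrow> I \<subseteq> R \<and> 0 \<in> I \<and> (\<forall>x\<in>I. \<forall>y\<in>I. x + y \<in> I) \<and>
     (\<forall>x\<in>I. - x \<in> I) \<and> (\<forall>r\<in>R. \<forall>x\<in>I. r * x \<in> I)"

definition principal_ring :: "complex set \<Rightarrow> bool" where
  "principal_ring R \<longleftrightarrow> (\<forall>I. is_ideal_of R I \<longrightarrow> (\<exists>a\<in>R. I = {a * x | x. x \<in> R}))"

definition upper_half_space :: "nat \<Rightarrow> (nat \<Rightarrow> complex) set" where
  "upper_half_space n = {z. (\<forall>i\<in>{1..n}. Im (z i) > 0) \<and> (\<forall>i. i \<notin> {1..n} \<longrightarrow> z i = 0)}"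

definition holomorphic_on_Hn :: "nat \<Rightarrow> ((nat \<Rightarrow> complex) \<Rightarrow> complex) \<Rightarrow> bool" where
  "holomorphic_on_Hn n F \<longleftrightarrow>
     (\<forall>z\<in>upper_half_space n. \<forall>\<epsilon>>0. \<exists>\<delta>>0. \<forall>w\<in>upper_half_space n.
        (\<forall>i\<in>{1..n}. cmod (w i - z i) < \<delta>) \<longrightarrow> cmod (F w - F z) < \<epsilon>) \<and>
     (\<forall>z\<in>upper_half_space n. \<forall>i\<in>{1..n}.
        (\<lambda>w. F (z(i := w))) field_differentiable (at (z i)))"

definition partial_z :: "nat \<Rightarrow> ((nat \<Rightarrow> complex) \<Rightarrow> complex) \<Rightarrow> (nat \<Rightarrow> complex) \<Rightarrow> complex" where
  "partial_z i F z = deriv (\<lambda>w. F (z(i := w))) (z i)"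

definition moebius_action ::
  "nat \<Rightarrow> (nat \<Rightarrow> complex \<Rightarrow> complex) \<Rightarrow> complex \<Rightarrow> complex \<Rightarrow> complex \<Rightarrow> complex
     \<Rightarrow> (nat \<Rightarrow> complex) \<Rightarrow> (nat \<Rightarrow> complex)" where
  "moebius_action n \<sigma> a b c d z =
     (\<lambda>i. if i \<in> {1..n} then (\<sigma> i a * z i + \<sigma> i b) / (\<sigma> i c * z i + \<sigma> i d) else 0)"

definition in_SL2 :: "complex set \<Rightarrow> complex \<Rightarrow> complex \<Rightarrow> complex \<Rightarrow> complex \<Rightarrow> bool" where
  "in_SL2 R a b c d \<longleftrightarrow> a \<in> R \<and> b \<in> R \<and> c \<in> R \<and> d \<in> R \<and> a * d - b * c = 1"

definition hilbert_modular_form ::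
  "complex set \<Rightarrow> nat \<Rightarrow> (nat \<Rightarrow> complex \<Rightarrow> complex) \<Rightarrow> (nat \<Rightarrow> int)
     \<Rightarrow> ((nat \<Rightarrow> complex) \<Rightarrow> complex) \<Rightarrow> bool" where
  "hilbert_modular_form K n \<sigma> f F \<longleftrightarrow> holomorphic_on_Hn n F \<and>
     (\<forall>a b c d. in_SL2 (ring_of_integers K) a b c d \<longrightarrow>
       (\<forall>z\<in>upper_half_space n.
          F (moebius_action n \<sigma> a b c d z) =
            (\<Prod>i=1..n. (\<sigma> i c * z i + \<sigma> i d) powi f i) * F z))"

definition parallel_weight_on :: "nat set \<Rightarrow> (nat \<Rightarrow> int) \<Rightarrow> int \<Rightarrow> bool" where
  "parallel_weight_on I f k \<longleftrightarrow> (\<forall>i\<in>I. f i = k)"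

text \<open>The bracket <F_1,...,F_{m+1}>_1: determinant of the (m+1)x(m+1) matrix whose first row is
  r_j F_j and whose (k+1)-th row is dF_j/dz_k (rows/columns 0-indexed here, column j for F_{j+1}).\<close>
definition bracket ::
  "nat \<Rightarrow> (nat \<Rightarrow> int) \<Rightarrow> (nat \<Rightarrow> (nat \<Rightarrow> complex) \<Rightarrow> complex) \<Rightarrow> (nat \<Rightarrow> complex) \<Rightarrow> complex" where
  "bracket m r F z = det (mat (m + 1) (m + 1) (\<lambda>(k, j).
      if k = 0 then of_int (r (j + 1)) * F (j + 1) z else partial_z k (F (j + 1)) z))"

end

theory Submission
  imports Defs "HOL-Complex_Analysis.Complex_Analysis"
begin


abbreviation "UHP \<equiv> {w::complex. 0 < Im w}"

lemma open_UHP: "open UHP"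
  by (simp add: open_halfspace_Im_gt)

lemma Hn_upd: "z \<in> upper_half_space n \<Longrightarrow> i \<in> {1..n} \<Longrightarrow> 0 < Im w \<Longrightarrow> z(i:=w) \<in> upper_half_space n"
  by (auto simp: upper_half_space_def)

lemma Hn_Im: "z \<in> upper_half_space n \<Longrightarrow> i \<in> {1..n} \<Longrightarrow> 0 < Im (z i)"
  by (auto simp: upper_half_space_def)

definition nbh :: "nat \<Rightarrow> (nat \<Rightarrow> complex) \<Rightarrow> (nat \<Rightarrow> complex) filter" where
 "nbh n z = (INF d\<in>{0<..}. principal {w\<in>upper_half_space n. \<forall>i\<in>{1..n}. cmod (w i - z i) < d})"

lemma eventually_nbh: "eventually P (nbh n z) \<longleftrightarrow>
   (\<exists>d>0. \<forall>w\<in>upper_half_space n. (\<forall>i\<in>{1..n}. cmod (w i - z i) < d) \<longrightarrow> P w)"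
  unfolding nbh_def
  apply (subst eventually_INF_base)
    apply simp
  subgoal for a b by (rule bexI[of _ "min a b"]) auto
  by (auto simp: eventually_principal)

definition hcont :: "nat \<Rightarrow> ((nat \<Rightarrow> complex) \<Rightarrow> complex) \<Rightarrow> bool" where
  "hcont n G \<longleftrightarrow> (\<forall>z\<in>upper_half_space n. \<forall>\<epsilon>>0. \<exists>\<delta>>0. \<forall>w\<in>upper_half_space n.
        (\<forall>i\<in>{1..n}. cmod (w i - z i) < \<delta>) \<longrightarrow> cmod (G w - G z) < \<epsilon>)"

lemma hcont_iff: "hcont n G \<longleftrightarrow> (\<forall>z\<in>upper_half_space n. (G \<longlongrightarrow> G z) (nbh n z))"
  unfolding hcont_def tendsto_iff eventually_nbh dist_norm by auto

definition hsep :: "nat \<Rightarrow> ((nat \<Rightarrow> complex) \<Rightarrow> complex) \<Rightarrow> bool" where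
  "hsep n G \<longleftrightarrow> (\<forall>z\<in>upper_half_space n. \<forall>i\<in>{1..n}. (\<lambda>w. G (z(i:=w))) holomorphic_on UHP)"

lemma holo_Hn_iff: "holomorphic_on_Hn n G \<longleftrightarrow> hcont n G \<and> hsep n G"
proof
  assume H: "holomorphic_on_Hn n G"
  have "hsep n G" unfolding hsep_def
  proof (intro ballI)
    fix z i assume z: "z \<in> upper_half_space n" and i: "i \<in> {1..n}"
    show "(\<lambda>w. G (z(i:=w))) holomorphic_on UHP"
      unfolding holomorphic_on_open[OF open_UHP]
    proof (intro ballI exI)
      fix w assume w: "w \<in> UHP"
      have "z(i:=w) \<in> upper_half_space n" using Hn_upd[OF z i] w by simp
      then have "(\<lambda>u. G ((z(i:=w))(i := u))) field_differentiable (at ((z(i:=w)) i))"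
        using H i unfolding holomorphic_on_Hn_def by blast
      then have "(\<lambda>u. G (z(i := u))) field_differentiable (at w)" by simp
      then show "((\<lambda>u. G (z(i := u))) has_field_derivative deriv (\<lambda>u. G (z(i := u))) w) (at w)"
        using DERIV_deriv_iff_field_differentiable by blast
    qed
  qed
  then show "hcont n G \<and> hsep n G" using H unfolding holomorphic_on_Hn_def hcont_def by blast
next
  assume H: "hcont n G \<and> hsep n G"
  show "holomorphic_on_Hn n G" unfolding holomorphic_on_Hn_def
  proof (intro conjI)
    show "\<forall>z\<in>upper_half_space n. \<forall>i\<in>{1..n}. (\<lambda>w. G (z(i := w))) field_differentiable at (z i)"
    proof (intro ballI)
      fix z i assume z: "z \<in> upper_half_space n" and i: "i \<in> {1..n}"
      then have "(\<lambda>w. G (z(i:=w))) holomorphic_on UHP" using H hsep_def by blast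
      then show "(\<lambda>w. G (z(i := w))) field_differentiable at (z i)"
        using holomorphic_on_imp_differentiable_at[OF _ open_UHP] Hn_Im[OF z i] by blast
    qed
  qed (use H in \<open>auto simp: hcont_def\<close>)
qed

lemma hcont_compose:
  assumes "hcont n G" and "\<And>p. p \<in> S \<Longrightarrow> \<Phi> p \<in> upper_half_space n"
    and "\<And>i. i \<in> {1..n} \<Longrightarrow> continuous_on S (\<lambda>p. \<Phi> p i)"
  shows "continuous_on S (\<lambda>p. G (\<Phi> p))"
  unfolding continuous_on_def
proof (intro ballI)
  fix p assume p: "p \<in> S"
  show "((\<lambda>p. G (\<Phi> p)) \<longlongrightarrow> G (\<Phi> p)) (at p within S)"
    unfolding tendsto_iff
  proof (intro allI impI)
    fix e :: real assume e: "0 < e"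
    obtain d where d: "d > 0" and dd: "\<And>w. w \<in> upper_half_space n \<Longrightarrow> (\<forall>i\<in>{1..n}. cmod (w i - \<Phi> p i) < d) \<Longrightarrow> cmod (G w - G (\<Phi> p)) < e"
      using assms(1) assms(2)[OF p] e unfolding hcont_def by meson
    have "\<forall>i\<in>{1..n}. eventually (\<lambda>x. dist (\<Phi> x i) (\<Phi> p i) < d) (at p within S)"
      using assms(3) p d unfolding continuous_on_def tendsto_iff by blast
    then have "eventually (\<lambda>x. \<forall>i\<in>{1..n}. dist (\<Phi> x i) (\<Phi> p i) < d) (at p within S)"
      by (intro eventually_ball_finite) auto
    moreover have "eventually (\<lambda>x. x \<in> S) (at p within S)"
      by (simp add: eventually_at_filter)
    ultimately show "eventually (\<lambda>x. dist (G (\<Phi> x)) (G (\<Phi> p)) < e) (at p within S)"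
    proof eventually_elim
      case (elim x)
      then show ?case using dd[of "\<Phi> x"] assms(2) by (auto simp: dist_norm)
    qed
  qed
qed

lemma partial_circle:
  assumes F: "holomorphic_on_Hn n F" and z: "z \<in> upper_half_space n" and k: "k \<in> {1..n}"
    and r: "0 < r" "r < Im (z k)"
  shows "partial_z k F z = 1/(2 * of_real pi * \<i>) * contour_integral (circlepath 0 r) (\<lambda>t. F (z(k:= z k + t)) / (t - 0)^2)"
proof -
  define f where "f = (\<lambda>w. F (z(k:=w)))"
  define g where "g = (\<lambda>t. F (z(k:= z k + t)))"
  have fh: "f holomorphic_on UHP" using F z k unfolding holo_Hn_iff hsep_def f_def by blast
  have "g = f \<circ> (\<lambda>t. z k + t)" by (auto simp: g_def f_def)
  moreover have "(\<lambda>t. z k + t) holomorphic_on {t. - Im (z k) < Im t}" by (intro holomorphic_intros)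
  moreover have "(\<lambda>t. z k + t) ` {t. - Im (z k) < Im t} \<subseteq> UHP" by auto
  ultimately have gh: "g holomorphic_on {t. - Im (z k) < Im t}"
    using holomorphic_on_compose_gen fh by metis
  have sub: "cball 0 r \<subseteq> {t. - Im (z k) < Im t}"
  proof
    fix t assume "t \<in> cball (0::complex) r"
    then have "cmod t \<le> r" by simp
    moreover have "\<bar>Im t\<bar> \<le> cmod t" by (rule abs_Im_le_cmod)
    ultimately show "t \<in> {t. - Im (z k) < Im t}" using r by auto
  qed
  have "(g has_field_derivative (1 / (2 * of_real pi * \<i>) * contour_integral(circlepath 0 r) (\<lambda>u. g u / (u-0)^2))) (at 0)"
    apply (rule Cauchy_derivative_integral_circlepath)
    using gh sub r ball_subset_cball[of 0 r]
    by ((meson holomorphic_on_imp_continuous_on holomorphic_on_subset order_trans)+, simp)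
  moreover have "(g has_field_derivative deriv f (z k)) (at 0)"
  proof -
    have "f field_differentiable at (z k)" using F z k unfolding holomorphic_on_Hn_def f_def by blast
    then have d1: "(f has_field_derivative deriv f (z k)) (at (z k + 0))"
      by (simp add: DERIV_deriv_iff_field_differentiable)
    have d2: "((\<lambda>t. z k + t) has_field_derivative 1) (at 0)" by (auto intro!: derivative_eq_intros)
    have "((f \<circ> (\<lambda>t. z k + t)) has_field_derivative deriv f (z k) * 1) (at 0)"
      by (rule DERIV_chain[OF d1 d2])
    then show ?thesis by (simp add: g_def f_def o_def)
  qed
  ultimately have "deriv f (z k) = 1 / (2 * of_real pi * \<i>) * contour_integral(circlepath 0 r) (\<lambda>u. g u / (u-0)^2)"
    using DERIV_unique by blast
  then show ?thesis by (simp add: partial_z_def f_def g_def)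
qed

lemma partial_circle_has:
  assumes F: "holomorphic_on_Hn n F" and z: "z \<in> upper_half_space n" and k: "k \<in> {1..n}"
    and r: "0 < r" "r < Im (z k)"
  shows "((\<lambda>t. F (z(k:= z k + t)) / (t - 0)^2) has_contour_integral (2 * of_real pi * \<i> * partial_z k F z)) (circlepath 0 r)"
proof -
  define g where "g = (\<lambda>t. F (z(k:= z k + t)))"
  have gh: "g holomorphic_on {t. - Im (z k) < Im t}"
  proof -
    have fh: "(\<lambda>w. F (z(k:=w))) holomorphic_on UHP" using F z k unfolding holo_Hn_iff hsep_def by blast
    have "g = (\<lambda>w. F (z(k:=w))) \<circ> (\<lambda>t. z k + t)" by (auto simp: g_def)
    moreover have "(\<lambda>t. z k + t) holomorphic_on {t. - Im (z k) < Im t}" by (intro holomorphic_intros)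
    moreover have "(\<lambda>t. z k + t) ` {t. - Im (z k) < Im t} \<subseteq> UHP" by auto
    ultimately show ?thesis using holomorphic_on_compose_gen fh by metis
  qed
  have sub: "cball 0 r \<subseteq> {t. - Im (z k) < Im t}"
  proof
    fix t assume "t \<in> cball (0::complex) r"
    then have "cmod t \<le> r" by simp
    moreover have "\<bar>Im t\<bar> \<le> cmod t" by (rule abs_Im_le_cmod)
    ultimately show "t \<in> {t. - Im (z k) < Im t}" using r by auto
  qed
  have "(\<lambda>u. g u/(u-0)^2) contour_integrable_on (circlepath 0 r)"
    apply (rule Cauchy_derivative_integral_circlepath)
    using gh sub r ball_subset_cball[of 0 r]
    by ((meson holomorphic_on_imp_continuous_on holomorphic_on_subset order_trans)+, simp)
  then have "((\<lambda>u. g u/(u-0)^2) has_contour_integral contour_integral (circlepath 0 r) (\<lambda>u. g u/(u-0)^2)) (circlepath 0 r)"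
    using has_contour_integral_integral by blast
  moreover have "contour_integral (circlepath 0 r) (\<lambda>u. g u/(u-0)^2) = 2 * of_real pi * \<i> * partial_z k F z"
    using partial_circle[OF assms] by (simp add: g_def)
  ultimately show ?thesis by (simp add: g_def)
qed

lemma circle_unif:
  assumes Fc: "hcont n F" and z: "z \<in> upper_half_space n" and k: "k \<in> {1..n}"
    and r: "0 < r" "r < Im (z k)" and eta: "0 < \<eta>"
  shows "\<exists>\<delta>>0. \<forall>w\<in>upper_half_space n. (\<forall>i\<in>{1..n}. cmod (w i - z i) < \<delta>) \<longrightarrow>
     (\<forall>t. cmod t = r \<longrightarrow> w(k:=w k + t) \<in> upper_half_space n \<and>
          cmod (F (w(k:=w k + t)) - F (z(k:=z k + t))) < \<eta>)"
proof -
  define q where "q = Im (z k) - r"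
  have q: "q > 0" using r by (simp add: q_def)
  have pt: "z(k:=z k+t) \<in> upper_half_space n" if "cmod t \<le> r" for t
  proof -
    have "\<bar>Im t\<bar> \<le> cmod t" by (rule abs_Im_le_cmod)
    then have "0 < Im (z k + t)" using that r by auto
    then show ?thesis using Hn_upd[OF z k] by blast
  qed
  have "\<forall>t\<in>sphere 0 r. \<exists>d>0. \<forall>w\<in>upper_half_space n. (\<forall>i\<in>{1..n}. cmod (w i - (z(k:=z k+t)) i) < d)
            \<longrightarrow> cmod (F w - F (z(k:=z k+t))) < \<eta>/2"
  proof
    fix t :: complex assume "t \<in> sphere 0 r"
    then have zt: "z(k:=z k+t) \<in> upper_half_space n" using pt by simp
    have "\<forall>\<epsilon>>0. \<exists>d>0. \<forall>w\<in>upper_half_space n. (\<forall>i\<in>{1..n}. cmod (w i - (z(k:=z k+t)) i) < d)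
            \<longrightarrow> cmod (F w - F (z(k:=z k+t))) < \<epsilon>"
      using Fc zt unfolding hcont_def by blast
    then show "\<exists>d>0. \<forall>w\<in>upper_half_space n. (\<forall>i\<in>{1..n}. cmod (w i - (z(k:=z k+t)) i) < d)
            \<longrightarrow> cmod (F w - F (z(k:=z k+t))) < \<eta>/2"
      using eta half_gt_zero by blast
  qed
  from bchoice[OF this] obtain D where D': "\<forall>t\<in>sphere 0 r. D t > 0 \<and> (\<forall>w\<in>upper_half_space n. (\<forall>i\<in>{1..n}. cmod (w i - (z(k:=z k+t)) i) < D t)
            \<longrightarrow> cmod (F w - F (z(k:=z k+t))) < \<eta>/2)"
    by blast
  have D: "\<And>t. t \<in> sphere 0 r \<Longrightarrow> D t > 0" using D' by blast
  have DD: "\<And>t w. t \<in> sphere 0 r \<Longrightarrow> w \<in> upper_half_space n \<Longrightarrow> (\<forall>i\<in>{1..n}. cmod (w i - (z(k:=z k+t)) i) < D t)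
            \<Longrightarrow> cmod (F w - F (z(k:=z k+t))) < \<eta>/2"
    using D' by blast
  have cov: "sphere (0::complex) r \<subseteq> (\<Union>t\<in>sphere 0 r. ball t (D t / 2))"
  proof
    fix t :: complex assume t: "t \<in> sphere 0 r"
    show "t \<in> (\<Union>t\<in>sphere 0 r. ball t (D t / 2))"
      using D[OF t] t by (intro UN_I[of t]) auto
  qed
  obtain C where C: "C \<subseteq> sphere 0 r" "finite C" and Ccov: "sphere 0 r \<subseteq> (\<Union>t\<in>C. ball t (D t / 2))"
  proof (rule compactE_image[OF compact_sphere _ cov])
    show "\<And>T. T \<in> sphere 0 r \<Longrightarrow> open (ball T (D T / 2))" by simp
  qed (blast intro: that)
  define \<delta> where "\<delta> = Min (insert q ((\<lambda>t. D t / 2) ` C))"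
  have fin: "finite (insert q ((\<lambda>t. D t / 2) ` C))" using C by simp
  have dpos: "\<delta> > 0" unfolding \<delta>_def using fin q C D by (auto simp: Min_gr_iff)
  have dq: "\<delta> \<le> q" unfolding \<delta>_def using fin by simp
  have dD: "\<delta> \<le> D t / 2" if "t \<in> C" for t unfolding \<delta>_def using fin that by (intro Min_le) auto
  show ?thesis
  proof (rule exI[of _ \<delta>], rule conjI[OF dpos], intro ballI impI allI)
    fix w t assume w: "w \<in> upper_half_space n" and wz: "\<forall>i\<in>{1..n}. cmod (w i - z i) < \<delta>" and t: "cmod t = r"
    have "t \<in> sphere 0 r" using t by simp
    then obtain t' where t': "t' \<in> C" and tt': "dist t' t < D t' / 2" using Ccov by auto
    have t's: "t' \<in> sphere 0 r" using t' C by auto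
    have "\<bar>Im (w k - z k)\<bar> \<le> cmod (w k - z k)" by (rule abs_Im_le_cmod)
    moreover have "\<bar>Im t\<bar> \<le> cmod t" by (rule abs_Im_le_cmod)
    moreover have "cmod (w k - z k) < \<delta>" using wz k by blast
    ultimately have "0 < Im (w k + t)" using dq t unfolding q_def by auto
    then have w'H: "w(k:=w k + t) \<in> upper_half_space n" using Hn_upd[OF w k] by blast
    have z'H: "z(k:=z k + t) \<in> upper_half_space n" using pt t by simp
    have "\<forall>i\<in>{1..n}. cmod ((w(k:=w k + t)) i - (z(k:=z k+t')) i) < D t'"
    proof
      fix i assume i: "i \<in> {1..n}"
      show "cmod ((w(k:=w k + t)) i - (z(k:=z k+t')) i) < D t'"
      proof (cases "i = k")
        case True
        have "cmod (w k + t - (z k + t')) \<le> cmod (w k - z k) + cmod (t - t')"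
          using norm_triangle_ineq[of "w k - z k" "t - t'"] by (simp add: algebra_simps)
        also have "\<dots> < \<delta> + D t' / 2" using wz k tt' by (intro add_strict_mono) (auto simp: dist_norm norm_minus_commute)
        also have "\<dots> \<le> D t'" using dD[OF t'] by simp
        finally show ?thesis using True by simp
      next
        case False
        then show ?thesis using wz i dD[OF t'] D[OF t's] by fastforce
      qed
    qed
    then have 1: "cmod (F (w(k:=w k + t)) - F (z(k:=z k+t'))) < \<eta>/2" using DD[OF t's w'H] by blast
    have "\<forall>i\<in>{1..n}. cmod ((z(k:=z k + t)) i - (z(k:=z k+t')) i) < D t'"
      using tt' D[OF t's] by (auto simp: dist_norm norm_minus_commute)
    then have 2: "cmod (F (z(k:=z k + t)) - F (z(k:=z k+t'))) < \<eta>/2" using DD[OF t's z'H] by blast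
    have "cmod (F (w(k:=w k + t)) - F (z(k:=z k + t))) \<le> cmod (F (w(k:=w k + t)) - F (z(k:=z k+t'))) + cmod (F (z(k:=z k + t)) - F (z(k:=z k+t')))"
      using norm_triangle_ineq4[of "F (w(k:=w k + t)) - F (z(k:=z k+t'))" "F (z(k:=z k + t)) - F (z(k:=z k+t'))"]
      by (simp add: algebra_simps)
    then show "w(k:=w k + t) \<in> upper_half_space n \<and> cmod (F (w(k:=w k + t)) - F (z(k:=z k + t))) < \<eta>"
      using 1 2 w'H by linarith
  qed
qed

lemma hcont_partial:
  assumes F: "holomorphic_on_Hn n F" and k: "k \<in> {1..n}"
  shows "hcont n (partial_z k F)"
  unfolding hcont_def
proof (intro ballI allI impI)
  fix z and \<epsilon> :: real assume z: "z \<in> upper_half_space n" and e: "0 < \<epsilon>"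
  define r where "r = Im (z k) / 2"
  have zk: "0 < Im (z k)" using Hn_Im[OF z k] .
  have r: "0 < r" "r < Im (z k)" using zk by (auto simp: r_def)
  have Fc: "hcont n F" using F holo_Hn_iff by blast
  obtain \<delta> where dpos: "\<delta> > 0" and H: "\<forall>w\<in>upper_half_space n. (\<forall>i\<in>{1..n}. cmod (w i - z i) < \<delta>) \<longrightarrow>
     (\<forall>t. cmod t = r \<longrightarrow> w(k:=w k + t) \<in> upper_half_space n \<and>
          cmod (F (w(k:=w k + t)) - F (z(k:=z k + t))) < \<epsilon> * r / 2)"
    using circle_unif[OF Fc z k r, of "\<epsilon> * r / 2"] e r by auto
  show "\<exists>\<delta>>0. \<forall>w\<in>upper_half_space n. (\<forall>i\<in>{1..n}. cmod (w i - z i) < \<delta>) \<longrightarrow>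
          cmod (partial_z k F w - partial_z k F z) < \<epsilon>"
  proof (rule exI[of _ "min \<delta> r"], rule conjI, simp add: dpos r, intro ballI impI)
    fix w assume w: "w \<in> upper_half_space n" and wz: "\<forall>i\<in>{1..n}. cmod (w i - z i) < min \<delta> r"
    have "\<bar>Im (w k - z k)\<bar> \<le> cmod (w k - z k)" by (rule abs_Im_le_cmod)
    moreover have "cmod (w k - z k) < r" using wz k by auto
    ultimately have wr: "r < Im (w k)" by (auto simp: r_def)
    have hw: "((\<lambda>t. F (w(k:= w k + t)) / (t - 0)^2) has_contour_integral (2 * of_real pi * \<i> * partial_z k F w)) (circlepath 0 r)"
      using partial_circle_has[OF F w k r(1) wr] .
    have hz: "((\<lambda>t. F (z(k:= z k + t)) / (t - 0)^2) has_contour_integral (2 * of_real pi * \<i> * partial_z k F z)) (circlepath 0 r)"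
      using partial_circle_has[OF F z k r] .
    have Hw: "\<And>t. cmod t = r \<Longrightarrow> cmod (F (w(k:=w k + t)) - F (z(k:=z k + t))) < \<epsilon> * r / 2"
      using H w wz by auto
    have "norm (2 * of_real pi * \<i> * partial_z k F w - 2 * of_real pi * \<i> * partial_z k F z) \<le> (\<epsilon> * r / 2 / r^2) * (2 * pi * r)"
    proof (rule has_contour_integral_bound_circlepath[OF has_contour_integral_diff[OF hw hz]])
      show "0 \<le> \<epsilon> * r / 2 / r^2" using e r by simp
      show "0 < r" using r by simp
      fix x :: complex assume x: "norm (x - 0) = r"
      have "norm (F (w(k:= w k + x)) / (x - 0)^2 - F (z(k:= z k + x)) / (x - 0)^2)
          = cmod (F (w(k:=w k + x)) - F (z(k:=z k + x))) / r^2"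
        using x by (simp add: diff_divide_distrib[symmetric] norm_divide norm_power)
      also have "\<dots> \<le> \<epsilon> * r / 2 / r^2" using Hw[of x] x r by (intro divide_right_mono) auto
      finally show "norm (F (w(k:= w k + x)) / (x - 0)^2 - F (z(k:= z k + x)) / (x - 0)^2) \<le> \<epsilon> * r / 2 / r^2" .
    qed
    also have "\<dots> = pi * \<epsilon>" using r by (simp add: power2_eq_square field_simps)
    finally have "2 * pi * cmod (partial_z k F w - partial_z k F z) \<le> pi * \<epsilon>"
      by (simp add: right_diff_distrib[symmetric] norm_mult)
    then have "cmod (partial_z k F w - partial_z k F z) \<le> \<epsilon> / 2"
      using pi_gt_zero by (simp add: field_simps)
    then show "cmod (partial_z k F w - partial_z k F z) < \<epsilon>" using e by linarith
  qed
qed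



lemma cont_upd1:
  assumes "continuous_on S f"
  shows "continuous_on S (\<lambda>p. (z(i:=f p)) j)"
  using assms by (cases "j = i") auto

lemma hsep_partial:
  assumes F: "holomorphic_on_Hn n F" and k: "k \<in> {1..n}"
  shows "hsep n (partial_z k F)"
  unfolding hsep_def
proof (intro ballI)
  fix z i assume z: "z \<in> upper_half_space n" and i: "i \<in> {1..n}"
  have fh: "(\<lambda>w. F (z(k:=w))) holomorphic_on UHP" using F z k unfolding holo_Hn_iff hsep_def by blast
  show "(\<lambda>u. partial_z k F (z(i:=u))) holomorphic_on UHP"
  proof (cases "i = k")
    case True
    have "(\<lambda>u. partial_z k F (z(i:=u))) = deriv (\<lambda>w. F (z(k:=w)))"
      using True by (auto simp: partial_z_def fun_eq_iff)
    then show ?thesis using holomorphic_deriv[OF fh open_UHP] by simp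
  next
    case False
    define h where "h = (\<lambda>u. partial_z k F (z(i:=u)))"
    define c :: complex where "c = 2 * of_real pi * \<i>"
    have c0: "c \<noteq> 0" by (simp add: c_def)
    define \<rho> where "\<rho> = Im (z k) / 2"
    have zk: "0 < Im (z k)" using Hn_Im[OF z k] .
    have \<rho>: "0 < \<rho>" "\<rho> < Im (z k)" using zk by (auto simp: \<rho>_def)
    define G where "G = (\<lambda>s t. F ((z(i:=s))(k:= z k + t)))"
    have zi: "z(i:=s) \<in> upper_half_space n" if "0 < Im s" for s using Hn_upd[OF z i that] .
    have zik: "(z(i:=s)) k = z k" for s using False by simp
    have hc: "continuous_on UHP h"
      unfolding h_def
    proof (rule hcont_compose[OF hcont_partial[OF F k]])
      fix p :: complex assume "p \<in> UHP" then show "z(i:=p) \<in> upper_half_space n" using zi by simp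
    next
      fix j :: nat assume "j \<in> {1..n}"
      show "continuous_on UHP (\<lambda>p. (z(i:=p)) j)" by (rule cont_upd1) (rule continuous_on_id)
    qed
    have Gs: "(\<lambda>s. G s t) holomorphic_on UHP" if t: "- Im (z k) < Im t" for t
    proof -
      have "0 < Im (z k + t)" using t by simp
      then have "z(k:=z k + t) \<in> upper_half_space n" using Hn_upd[OF z k] by blast
      then have "(\<lambda>s. F ((z(k:=z k + t))(i:=s))) holomorphic_on UHP"
        using F i unfolding holo_Hn_iff hsep_def by blast
      moreover have "(\<lambda>s. F ((z(k:=z k + t))(i:=s))) = (\<lambda>s. G s t)"
        using False by (auto simp: G_def fun_upd_twist)
      ultimately show ?thesis by simp
    qed
    have sph\<rho>: "- Im (z k) < Im t" if "t \<in> cball 0 \<rho>" for t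
    proof -
      have "\<bar>Im t\<bar> \<le> cmod t" by (rule abs_Im_le_cmod)
      then show ?thesis using that \<rho> by auto
    qed
    show ?thesis
      unfolding holomorphic_on_def
    proof (intro ballI, rule field_differentiable_at_within)
      fix u0 :: complex assume u0: "u0 \<in> UHP"
      define R where "R = Im u0 / 2"
      have R: "0 < R" using u0 by (simp add: R_def)
      have sphR: "0 < Im s" if "s \<in> cball u0 R" for s
      proof -
        have "\<bar>Im (s - u0)\<bar> \<le> cmod (s - u0)" by (rule abs_Im_le_cmod)
        moreover have "cmod (s - u0) \<le> R" using that by (simp add: dist_norm norm_minus_commute)
        moreover have "Im (s - u0) = Im s - Im u0" by simp
        moreover have "0 < Im u0" using u0 by simp
        ultimately show ?thesis unfolding R_def by linarith
      qed
      have Step1: "((\<lambda>t. G s t/(t-0)^2) has_contour_integral (c * h s)) (circlepath 0 \<rho>)"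
        if "s \<in> cball u0 R" for s
        using partial_circle_has[OF F zi[OF sphR[OF that]] k \<rho>(1)] \<rho>(2)
        using False by (simp add: zik G_def h_def c_def eq_commute[of k i])
      have Step2: "((\<lambda>s. G s t/(s-u)) has_contour_integral (c * G u t)) (circlepath u0 R)"
        if "cmod t = \<rho>" "u \<in> ball u0 R" for t u
      proof -
        have t0: "t \<in> cball 0 \<rho>" using that by simp
        have sub: "cball u0 R \<subseteq> UHP" using sphR by blast
        have hc: "(\<lambda>s. G s t) holomorphic_on cball u0 R"
          by (rule holomorphic_on_subset[OF Gs[OF sph\<rho>[OF t0]] sub])
        have hb: "(\<lambda>s. G s t) holomorphic_on ball u0 R"
          by (rule holomorphic_on_subset[OF hc ball_subset_cball])
        have nu: "norm (u - u0) < R" using that(2) by (simp add: dist_norm norm_minus_commute)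
        show ?thesis unfolding c_def
          by (rule Cauchy_integral_circlepath[OF holomorphic_on_imp_continuous_on[OF hc] hb nu])
      qed
      have Main: "((\<lambda>s. h s/(s-u)^1) has_contour_integral (c * h u)) (circlepath u0 R)"
        if u: "u \<in> ball u0 R" for u
      proof -
        have uc: "u \<in> cball u0 R" using u by auto
        have pt: "path_image (circlepath 0 \<rho>) = sphere 0 \<rho>" using \<rho> by (simp add: path_image_circlepath_nonneg)
        have ps: "path_image (circlepath u0 R) = sphere u0 R" using R by (simp add: path_image_circlepath_nonneg)
        have su: "s - u \<noteq> 0" if "s \<in> sphere u0 R" for s using that u by auto
        have e1: "c * h u = contour_integral (circlepath 0 \<rho>) (\<lambda>t. G u t/(t-0)^2)"
          using Step1[OF uc] contour_integral_unique by metis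
        also have e2: "\<dots> = contour_integral (circlepath 0 \<rho>) (\<lambda>t. contour_integral (circlepath u0 R) (\<lambda>s. G s t/(s-u)/((t-0)^2*c)))"
        proof (rule contour_integral_eq)
          fix t assume "t \<in> path_image (circlepath 0 \<rho>)"
          then have t: "cmod t = \<rho>" using pt \<rho> by simp
          have "contour_integral (circlepath u0 R) (\<lambda>s. G s t/(s-u)/((t-0)^2*c))
                = contour_integral (circlepath u0 R) (\<lambda>s. G s t/(s-u)) / ((t-0)^2*c)"
            using Step2[OF t u] by (intro contour_integral_div) (auto simp: has_contour_integral_integrable)
          also have "\<dots> = c * G u t / ((t-0)^2*c)"
            using Step2[OF t u] contour_integral_unique by metis
          also have "\<dots> = G u t/(t-0)^2" using c0 by simp
          finally show "G u t/(t-0)^2 = contour_integral (circlepath u0 R) (\<lambda>s. G s t/(s-u)/((t-0)^2*c))" by simp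
        qed
        also have e3: "\<dots> = contour_integral (circlepath u0 R) (\<lambda>s. contour_integral (circlepath 0 \<rho>) (\<lambda>t. G s t/(s-u)/((t-0)^2*c)))"
        proof (rule contour_integral_swap)
          have Gc: "continuous_on (sphere 0 \<rho> \<times> sphere u0 R) (\<lambda>p. G (snd p) (fst p))"
            unfolding G_def
          proof (rule hcont_compose[where G = F])
            show "hcont n F" using F holo_Hn_iff by blast
            fix p :: "complex \<times> complex" assume p: "p \<in> sphere 0 \<rho> \<times> sphere u0 R"
            then have "0 < Im (snd p)" using sphR by auto
            moreover have "0 < Im (z k + fst p)" using sph\<rho>[of "fst p"] p by auto
            ultimately show "(z(i := snd p))(k := z k + fst p) \<in> upper_half_space n"
              using Hn_upd[OF Hn_upd[OF z i] k] by blast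
          next
            fix j show "continuous_on (sphere 0 \<rho> \<times> sphere u0 R) (\<lambda>p. ((z(i := snd p))(k := z k + fst p)) j)"
              by (cases "j = k"; cases "j = i") (simp_all add: continuous_on_add continuous_on_const continuous_on_fst continuous_on_snd continuous_on_id)
          qed
          show "continuous_on (path_image (circlepath 0 \<rho>) \<times> path_image (circlepath u0 R))
                  (\<lambda>(y1, y2). G y2 y1 / (y2 - u) / ((y1 - 0)\<^sup>2 * c))"
            unfolding pt ps case_prod_unfold
          proof (rule continuous_on_divide[OF continuous_on_divide[OF Gc]])
            show "continuous_on (sphere 0 \<rho> \<times> sphere u0 R) (\<lambda>x. snd x - u)"
              by (intro continuous_on_diff continuous_on_snd continuous_on_id continuous_on_const)
            show "continuous_on (sphere 0 \<rho> \<times> sphere u0 R) (\<lambda>x. (fst x - 0)\<^sup>2 * c)"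
              by (intro continuous_on_mult continuous_on_power continuous_on_diff continuous_on_fst continuous_on_id continuous_on_const)
            show "\<forall>x\<in>sphere 0 \<rho> \<times> sphere u0 R. snd x - u \<noteq> 0" using su by auto
            show "\<forall>x\<in>sphere 0 \<rho> \<times> sphere u0 R. (fst x - 0)\<^sup>2 * c \<noteq> 0" using \<rho> c0 by auto
          qed
          show "continuous_on {0..1} (\<lambda>t. vector_derivative (circlepath 0 \<rho>) (at t))"
            unfolding vector_derivative_circlepath by (intro continuous_intros)
          show "continuous_on {0..1} (\<lambda>t. vector_derivative (circlepath u0 R) (at t))"
            unfolding vector_derivative_circlepath by (intro continuous_intros)
        qed simp_all
        also have e4: "\<dots> = contour_integral (circlepath u0 R) (\<lambda>s. h s/(s-u))"
        proof (rule contour_integral_eq)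
          fix s assume "s \<in> path_image (circlepath u0 R)"
          then have s: "s \<in> sphere u0 R" using ps R by simp
          then have sc: "s \<in> cball u0 R" by auto
          have "contour_integral (circlepath 0 \<rho>) (\<lambda>t. G s t/(s-u)/((t-0)^2*c))
              = contour_integral (circlepath 0 \<rho>) (\<lambda>t. G s t/(t-0)^2/((s-u)*c))"
            by (intro contour_integral_eq) (simp add: divide_divide_eq_left mult_ac)
          also have "\<dots> = contour_integral (circlepath 0 \<rho>) (\<lambda>t. G s t/(t-0)^2) / ((s-u)*c)"
            using Step1[OF sc] by (intro contour_integral_div) (auto simp: has_contour_integral_integrable)
          also have "\<dots> = c * h s / ((s-u)*c)"
            using Step1[OF sc] contour_integral_unique by metis
          also have "\<dots> = h s/(s-u)" using c0 by simp
          finally show "contour_integral (circlepath 0 \<rho>) (\<lambda>t. G s t/(s-u)/((t-0)^2*c)) = h s/(s-u)" .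
        qed
        finally have eq: "c * h u = contour_integral (circlepath u0 R) (\<lambda>s. h s/(s-u))" .
        have "continuous_on (sphere u0 R) (\<lambda>s. h s/(s-u))"
          using su sphR by (intro continuous_intros continuous_on_subset[OF hc]) auto
        then have "(\<lambda>s. h s/(s-u)) contour_integrable_on (circlepath u0 R)"
          using ps contour_integrable_continuous_circlepath by metis
        then show ?thesis using eq has_contour_integral_integral by fastforce
      qed
      have "continuous_on (path_image (circlepath u0 R)) h"
        using R sphR by (intro continuous_on_subset[OF hc]) (auto simp: path_image_circlepath_nonneg)
      then obtain X where "((\<lambda>w. c * h w) has_field_derivative X) (at u0)"
        using Cauchy_next_derivative_circlepath(2)[of u0 R h 1 "\<lambda>w. c * h w" u0] Main R by auto
      then have "((\<lambda>w. (1/c) * (c * h w)) has_field_derivative (1/c) * X) (at u0)"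
        by (rule DERIV_cmult)
      then have "(h has_field_derivative (1/c) * X) (at u0)" using c0 by simp
      then show "(\<lambda>u. partial_z k F (z(i:=u))) field_differentiable at u0"
        unfolding h_def field_differentiable_def by blast
    qed
  qed
qed



lemma holo_partial:
  assumes "holomorphic_on_Hn n F" "k \<in> {1..n}"
  shows "holomorphic_on_Hn n (partial_z k F)"
  using hcont_partial[OF assms] hsep_partial[OF assms] holo_Hn_iff by blast

lemma holo_cmult:
  assumes "holomorphic_on_Hn n G"
  shows "holomorphic_on_Hn n (\<lambda>z. c * G z)"
proof -
  have "hcont n G" "hsep n G" using assms holo_Hn_iff by blast+
  then have "hcont n (\<lambda>z. c * G z)" unfolding hcont_iff by (auto intro!: tendsto_mult tendsto_const)
  moreover have "hsep n (\<lambda>z. c * G z)" using \<open>hsep n G\<close> unfolding hsep_def by (auto intro!: holomorphic_intros)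
  ultimately show ?thesis using holo_Hn_iff by blast
qed

lemma det_mat_expand:
  "Determinant.det (mat N N (\<lambda>(a,b). E a b)) = (\<Sum>p\<in>{p. p permutes {0..<N}}. signof p * (\<Prod>i=0..<N. E i (p i)))"
proof -
  have "Determinant.det (mat N N (\<lambda>(a,b). E a b)) = (\<Sum>p\<in>{p. p permutes {0..<N}}. signof p * (\<Prod>i=0..<N. (mat N N (\<lambda>(a,b). E a b)) $$ (i, p i)))"
    by (rule Determinant.det_def') simp
  also have "\<dots> = (\<Sum>p\<in>{p. p permutes {0..<N}}. signof p * (\<Prod>i=0..<N. E i (p i)))"
  proof (rule sum.cong[OF refl])
    fix p assume "p \<in> {p. p permutes {0..<N}}"
    then have "p permutes {0..<N}" by simp
    then have "\<And>i. i < N \<Longrightarrow> p i < N" using permutes_in_image by fastforce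
    then show "signof p * (\<Prod>i=0..<N. (mat N N (\<lambda>(a,b). E a b)) $$ (i, p i)) = signof p * (\<Prod>i=0..<N. E i (p i))"
      by (intro arg_cong2[where f="(*)"] refl prod.cong) auto
  qed
  finally show ?thesis .
qed

lemma holo_det:
  assumes "\<And>a b. a < N \<Longrightarrow> b < N \<Longrightarrow> holomorphic_on_Hn n (E a b)"
  shows "holomorphic_on_Hn n (\<lambda>z. Determinant.det (mat N N (\<lambda>(a,b). E a b z)))"
proof -
  have eq: "(\<lambda>z. Determinant.det (mat N N (\<lambda>(a,b). E a b z))) = (\<lambda>z. \<Sum>p\<in>{p. p permutes {0..<N}}. signof p * (\<Prod>i=0..<N. E i (p i) z))"
    using det_mat_expand[of N "\<lambda>a b. E a b _"] by (simp add: fun_eq_iff det_mat_expand)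
  have pp: "p i < N" if "p \<in> {p. p permutes {0..<N}}" "i \<in> {0..<N}" for p i
    using that permutes_in_image by fastforce
  have hc: "hcont n (E a b)" "hsep n (E a b)" if "a < N" "b < N" for a b
    using assms[OF that] holo_Hn_iff by blast+
  have "hcont n (\<lambda>z. \<Sum>p\<in>{p. p permutes {0..<N}}. signof p * (\<Prod>i=0..<N. E i (p i) z))"
    unfolding hcont_iff
  proof (intro ballI tendsto_sum tendsto_mult tendsto_const tendsto_prod)
    fix z p i assume z: "z \<in> upper_half_space n" and p: "p \<in> {p. p permutes {0..<N}}" and i: "i \<in> {0..<N}"
    show "(E i (p i) \<longlongrightarrow> E i (p i) z) (nbh n z)" using hc(1)[of i "p i"] pp[OF p i] i z unfolding hcont_iff by auto
  qed
  moreover have "hsep n (\<lambda>z. \<Sum>p\<in>{p. p permutes {0..<N}}. signof p * (\<Prod>i=0..<N. E i (p i) z))"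
    unfolding hsep_def
  proof (intro ballI holomorphic_on_sum holomorphic_on_mult holomorphic_on_const holomorphic_on_prod)
    fix z j p i assume z: "z \<in> upper_half_space n" and j: "j \<in> {1..n}" and p: "p \<in> {p. p permutes {0..<N}}" and i: "i \<in> {0..<N}"
    show "(\<lambda>w. E i (p i) (z(j := w))) holomorphic_on UHP" using hc(2)[of i "p i"] pp[OF p i] i z j unfolding hsep_def by auto
  qed
  ultimately show ?thesis unfolding eq using holo_Hn_iff by blast
qed

lemma moeb_basic:
  fixes A B C D w :: complex
  assumes "Im A = 0" "Im B = 0" "Im C = 0" "Im D = 0" "A * D - B * C = 1" "0 < Im w"
  shows "C * w + D \<noteq> 0" "0 < Im ((A * w + B) / (C * w + D))"
proof -
  have r: "Re A * Re D - Re B * Re C = 1" using arg_cong[OF assms(5), of Re] assms(1-4) by simp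
  show nz: "C * w + D \<noteq> 0"
  proof
    assume h: "C * w + D = 0"
    have "Im (C * w + D) = Re C * Im w" using assms(3,4) by simp
    then have "Re C * Im w = 0" using h by simp
    then have "Re C = 0" using assms(6) by simp
    moreover have "Re (C * w + D) = Re C * Re w + Re D" using assms(3) by simp
    ultimately have "Re D = 0" using h by simp
    moreover note \<open>Re C = 0\<close>
    ultimately show False using r by simp
  qed
  have "Im ((A * w + B) / (C * w + D)) = Im w / ((Re (C * w + D))\<^sup>2 + (Im (C * w + D))\<^sup>2)"
    unfolding Im_divide using assms(1-4) r
    by (simp add: algebra_simps)
  moreover have "(Re (C * w + D))\<^sup>2 + (Im (C * w + D))\<^sup>2 > 0" using nz
    by (metis complex_neq_0 )
  ultimately show "0 < Im ((A * w + B) / (C * w + D))" using assms(6) by simp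
qed

definition goodg :: "nat \<Rightarrow> (nat \<Rightarrow> complex \<Rightarrow> complex) \<Rightarrow> complex \<Rightarrow> complex \<Rightarrow> complex \<Rightarrow> complex \<Rightarrow> bool" where
  "goodg n \<sigma> a b c d \<longleftrightarrow> (\<forall>i\<in>{1..n}. Im (\<sigma> i a) = 0 \<and> Im (\<sigma> i b) = 0 \<and> Im (\<sigma> i c) = 0 \<and> Im (\<sigma> i d) = 0
      \<and> \<sigma> i a * \<sigma> i d - \<sigma> i b * \<sigma> i c = 1)"

lemma goodg_e_nz:
  assumes "goodg n \<sigma> a b c d" "z \<in> upper_half_space n" "i \<in> {1..n}"
  shows "\<sigma> i c * z i + \<sigma> i d \<noteq> 0"
  using assms moeb_basic(1)[of "\<sigma> i a" "\<sigma> i b" "\<sigma> i c" "\<sigma> i d" "z i"] Hn_Im[of z n i]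
  unfolding goodg_def by blast

lemma goodg_mob_Hn:
  assumes "goodg n \<sigma> a b c d" "z \<in> upper_half_space n"
  shows "moebius_action n \<sigma> a b c d z \<in> upper_half_space n"
  unfolding upper_half_space_def
proof (intro CollectI conjI ballI allI impI)
  fix i assume i: "i \<in> {1..n}"
  then show "0 < Im (moebius_action n \<sigma> a b c d z i)"
    using assms moeb_basic(2)[of "\<sigma> i a" "\<sigma> i b" "\<sigma> i c" "\<sigma> i d" "z i"] Hn_Im[of z n i]
    unfolding goodg_def moebius_action_def by auto
next
  fix i assume "i \<notin> {1..n}"
  then show "moebius_action n \<sigma> a b c d z i = 0" unfolding moebius_action_def by auto
qed

lemma deriv_transform:
  assumes F: "holomorphic_on_Hn n F"
    and md: "\<forall>z\<in>upper_half_space n. F (moebius_action n \<sigma> a b c d z) = (\<Prod>i=1..n. (\<sigma> i c * z i + \<sigma> i d) powi f i) * F z"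
    and g: "goodg n \<sigma> a b c d" and k: "k \<in> {1..n}" and z: "z \<in> upper_half_space n"
  shows "partial_z k F (moebius_action n \<sigma> a b c d z) = (\<Prod>i=1..n. (\<sigma> i c * z i + \<sigma> i d) powi f i) *
     (of_int (f k) * \<sigma> k c * (\<sigma> k c * z k + \<sigma> k d) * F z + (\<sigma> k c * z k + \<sigma> k d)^2 * partial_z k F z)"
proof -
  define A where "A = \<sigma> k a"
  define B where "B = \<sigma> k b"
  define C where "C = \<sigma> k c"
  define D where "D = \<sigma> k d"
  define e where "e = (\<lambda>i. \<sigma> i c * z i + \<sigma> i d)"
  define mz where "mz = moebius_action n \<sigma> a b c d z"
  define \<mu> where "\<mu> = (\<lambda>\<xi>. (A * \<xi> + B) / (C * \<xi> + D))"
  define P where "P = (\<Prod>i\<in>{1..n}-{k}. e i powi f i)"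
  have gk: "Im A = 0" "Im B = 0" "Im C = 0" "Im D = 0" "A * D - B * C = 1"
    using g k unfolding goodg_def A_def B_def C_def D_def by auto
  have upd: "moebius_action n \<sigma> a b c d (z(k:=\<xi>)) = mz(k := \<mu> \<xi>)" for \<xi>
    using k by (auto simp: moebius_action_def mz_def \<mu>_def fun_eq_iff A_def B_def C_def D_def)
  have prodk: "(\<Prod>i=1..n. (\<sigma> i c * (z(k:=\<xi>)) i + \<sigma> i d) powi f i) = (C * \<xi> + D) powi f k * P" for \<xi>
  proof -
    have "(\<Prod>i=1..n. (\<sigma> i c * (z(k:=\<xi>)) i + \<sigma> i d) powi f i)
        = (\<sigma> k c * (z(k:=\<xi>)) k + \<sigma> k d) powi f k * (\<Prod>i\<in>{1..n}-{k}. (\<sigma> i c * (z(k:=\<xi>)) i + \<sigma> i d) powi f i)"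
      using k by (intro prod.remove) auto
    also have "(\<Prod>i\<in>{1..n}-{k}. (\<sigma> i c * (z(k:=\<xi>)) i + \<sigma> i d) powi f i) = P"
      unfolding P_def e_def by (intro prod.cong) auto
    finally show ?thesis by (simp add: C_def D_def)
  qed
  have eqn: "F (mz(k := \<mu> \<xi>)) = (C * \<xi> + D) powi f k * P * F (z(k:=\<xi>))" if "\<xi> \<in> UHP" for \<xi>
  proof -
    have "z(k:=\<xi>) \<in> upper_half_space n" using Hn_upd[OF z k] that by simp
    then show ?thesis using md upd[of \<xi>] prodk[of \<xi>] by auto
  qed
  have mzH: "mz \<in> upper_half_space n" unfolding mz_def by (rule goodg_mob_Hn[OF g z])
  have \<mu>k: "\<mu> (z k) = mz k" using k by (simp add: \<mu>_def mz_def moebius_action_def A_def B_def C_def D_def)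
  have ek: "e k \<noteq> 0" unfolding e_def by (rule goodg_e_nz[OF g z k])
  have ekCD: "e k = C * z k + D" by (simp add: e_def C_def D_def)
  have d_mu: "(\<mu> has_field_derivative 1 / (e k)^2) (at (z k))"
  proof -
    have "((\<lambda>\<xi>. (A * \<xi> + B) / (C * \<xi> + D)) has_field_derivative ((A * 1 + 0) * (C * z k + D) - (A * z k + B) * (C * 1 + 0)) / ((C * z k + D) * (C * z k + D))) (at (z k))"
      using ek ekCD by (intro DERIV_divide DERIV_add DERIV_cmult DERIV_ident DERIV_const) auto
    moreover have "((A * 1 + 0) * (C * z k + D) - (A * z k + B) * (C * 1 + 0)) / ((C * z k + D) * (C * z k + D)) = 1 / (e k)^2"
      using gk(5) ekCD by (simp add: power2_eq_square algebra_simps)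
    ultimately show ?thesis unfolding \<mu>_def by simp
  qed
  have d_Phi: "((\<lambda>\<eta>. F (mz(k:=\<eta>))) has_field_derivative partial_z k F mz) (at (\<mu> (z k)))"
  proof -
    have "(\<lambda>\<eta>. F (mz(k:=\<eta>))) field_differentiable at (mz k)" using F mzH k unfolding holomorphic_on_Hn_def by blast
    then show ?thesis unfolding \<mu>k partial_z_def by (simp add: DERIV_deriv_iff_field_differentiable)
  qed
  have LHS: "((\<lambda>\<xi>. F (mz(k:=\<mu> \<xi>))) has_field_derivative partial_z k F mz * (1 / (e k)^2)) (at (z k))"
    using DERIV_chain'[OF d_mu d_Phi] by (simp add: mult.commute)
  have d_phi: "((\<lambda>\<xi>. F (z(k:=\<xi>))) has_field_derivative partial_z k F z) (at (z k))"
  proof -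
    have "(\<lambda>\<xi>. F (z(k:=\<xi>))) field_differentiable at (z k)" using F z k unfolding holomorphic_on_Hn_def by blast
    then show ?thesis unfolding partial_z_def by (simp add: DERIV_deriv_iff_field_differentiable)
  qed
  have d_pow: "((\<lambda>\<xi>. (C * \<xi> + D) powi f k) has_field_derivative of_int (f k) * (C * z k + D) powi (f k - 1) * (C * 1 + 0)) (at (z k))"
    using ek ekCD by (intro DERIV_power_int DERIV_add DERIV_cmult DERIV_ident DERIV_const) auto
  have RHS: "((\<lambda>\<xi>. ((C * \<xi> + D) powi f k * P) * F (z(k:=\<xi>))) has_field_derivative
       (of_int (f k) * (C * z k + D) powi (f k - 1) * (C * 1 + 0) * P) * F (z(k:=z k)) + partial_z k F z * ((C * z k + D) powi f k * P)) (at (z k))"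
    by (intro DERIV_mult DERIV_cmult_right d_pow d_phi)
  have zkU: "z k \<in> UHP" using Hn_Im[OF z k] by simp
  have LHS': "((\<lambda>\<xi>. ((C * \<xi> + D) powi f k * P) * F (z(k:=\<xi>))) has_field_derivative partial_z k F mz * (1 / (e k)^2)) (at (z k))"
    by (rule has_field_derivative_transform_within_open[OF LHS open_UHP zkU]) (simp add: eqn)
  have eq1: "partial_z k F mz * (1 / (e k)^2) = (of_int (f k) * (e k) powi (f k - 1) * C * P) * F z + partial_z k F z * ((e k) powi f k * P)"
    using DERIV_unique[OF LHS' RHS] ekCD by simp
  have pw: "(e k) powi (f k - 1) = (e k) powi (f k) / e k"
    using power_int_diff[of "e k" "f k" 1] ek by simp
  have eq2: "partial_z k F mz = (e k)^2 * ((of_int (f k) * (e k) powi (f k - 1) * C * P) * F z + partial_z k F z * ((e k) powi f k * P))"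
    using eq1 ek by (simp add: field_simps)
  also have "\<dots> = ((e k) powi f k * P) * (of_int (f k) * C * e k * F z + (e k)^2 * partial_z k F z)"
    unfolding pw using ek by (simp add: field_simps power2_eq_square)
  also have "(e k) powi f k * P = (\<Prod>i=1..n. (\<sigma> i c * z i + \<sigma> i d) powi f i)"
    using prodk[of "z k"] ekCD by simp
  finally show ?thesis by (simp add: mz_def e_def C_def D_def)
qed



lemma sum_two_if:
  fixes x :: "nat \<Rightarrow> 'a::comm_ring_1"
  assumes "0 < p" "p < N"
  shows "(\<Sum>l\<in>{0..<N}. (if l = 0 then \<alpha> else if l = p then \<beta> else 0) * x l) = \<alpha> * x 0 + \<beta> * x p"
proof -
  have "(\<Sum>l\<in>{0..<N}. (if l = 0 then \<alpha> else if l = p then \<beta> else 0) * x l)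
      = (\<Sum>l\<in>{0..<N}. (if l = 0 then \<alpha> * x 0 else 0) + (if l = p then \<beta> * x p else 0))"
    using assms by (intro sum.cong) auto
  also have "\<dots> = \<alpha> * x 0 + \<beta> * x p" using assms by (simp add: sum.distrib)
  finally show ?thesis .
qed

lemma det_transform:
  fixes X Y :: "nat \<Rightarrow> nat \<Rightarrow> complex" and J \<alpha> \<beta> :: "nat \<Rightarrow> complex"
  assumes Y0: "\<And>j. j < N \<Longrightarrow> Y 0 j = J j * X 0 j"
    and Yp: "\<And>p j. 0 < p \<Longrightarrow> p < N \<Longrightarrow> j < N \<Longrightarrow> Y p j = J j * (\<alpha> p * X 0 j + \<beta> p * X p j)"
  shows "Determinant.det (mat N N (\<lambda>(p,j). Y p j)) =
          (\<Prod>p\<in>{1..<N}. \<beta> p) * (\<Prod>j<N. J j) * Determinant.det (mat N N (\<lambda>(p,j). X p j))"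
proof -
  define L :: "complex mat" where "L = mat N N (\<lambda>(p,q). if p = 0 then (if q = 0 then 1 else 0)
      else if q = 0 then \<alpha> p else if q = p then \<beta> p else 0)"
  define Dg :: "complex mat" where "Dg = mat N N (\<lambda>(p,q). if p = q then J q else 0)"
  define XM where "XM = mat N N (\<lambda>(p,j). X p j)"
  have LX: "(L * XM) $$ (p,j) = (if p = 0 then X 0 j else \<alpha> p * X 0 j + \<beta> p * X p j)" if "p < N" "j < N" for p j
  proof -
    have "(L * XM) $$ (p,j) = (\<Sum>l\<in>{0..<N}. L $$ (p,l) * XM $$ (l,j))"
      using that by (simp add: L_def XM_def scalar_prod_def)
    also have "\<dots> = (\<Sum>l\<in>{0..<N}. (if p = 0 then (if l = 0 then 1 else 0)
      else if l = 0 then \<alpha> p else if l = p then \<beta> p else 0) * X l j)"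
      using that by (intro sum.cong) (auto simp: L_def XM_def)
    also have "\<dots> = (if p = 0 then X 0 j else \<alpha> p * X 0 j + \<beta> p * X p j)"
    proof (cases "p = 0")
      case True
      then show ?thesis using that by (simp add: if_distrib[of "\<lambda>x. x * _"] cong: if_cong)
    next
      case False
      then show ?thesis using sum_two_if[of p N "\<alpha> p" "\<beta> p" "\<lambda>l. X l j"] that by simp
    qed
    finally show ?thesis .
  qed
  have YM: "mat N N (\<lambda>(p,j). Y p j) = (L * XM) * Dg"
  proof (rule eq_matI)
    fix p j assume pj: "p < dim_row ((L * XM) * Dg)" "j < dim_col ((L * XM) * Dg)"
    then have p: "p < N" and j: "j < N" by (auto simp: L_def Dg_def)
    have "((L * XM) * Dg) $$ (p,j) = (\<Sum>l\<in>{0..<N}. (L * XM) $$ (p,l) * Dg $$ (l,j))"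
      using p j by (simp add: L_def Dg_def XM_def scalar_prod_def)
    also have "\<dots> = (\<Sum>l\<in>{0..<N}. (if l = j then (L * XM) $$ (p,j) * J j else 0))"
      using j by (intro sum.cong) (auto simp: Dg_def)
    also have "\<dots> = (L * XM) $$ (p,j) * J j" using j by simp
    also have "\<dots> = Y p j" using LX[OF p j] Y0[OF j] Yp[OF _ p j] by (cases "p = 0") (auto simp: mult.commute)
    finally show "mat N N (\<lambda>(p,j). Y p j) $$ (p,j) = ((L * XM) * Dg) $$ (p,j)" using p j by simp
  qed (auto simp: L_def Dg_def)
  have Lc: "L \<in> carrier_mat N N" and Dc: "Dg \<in> carrier_mat N N" and Xc: "XM \<in> carrier_mat N N"
    by (auto simp: L_def Dg_def XM_def)
  have detL: "Determinant.det L = (\<Prod>p\<in>{1..<N}. \<beta> p)"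
  proof -
    have "Determinant.det L = prod_list (diag_mat L)"
      by (rule det_lower_triangular[OF _ Lc]) (auto simp: L_def)
    also have "\<dots> = (\<Prod>i=0..<N. L $$ (i,i))" by (simp add: prod_list_diag_prod L_def)
    also have "\<dots> = (\<Prod>i=0..<N. if i = 0 then 1 else \<beta> i)" by (intro prod.cong) (auto simp: L_def)
    also have "\<dots> = (\<Prod>p\<in>{1..<N}. \<beta> p)"
    proof (cases N)
      case 0 then show ?thesis by simp
    next
      case (Suc M)
      have "(\<Prod>i=0..<N. if i = 0 then 1 else \<beta> i) = (\<Prod>i\<in>insert 0 {1..<N}. if i = 0 then 1 else \<beta> i)"
        using Suc by (intro prod.cong) auto
      also have "\<dots> = (\<Prod>i\<in>{1..<N}. if i = 0 then 1 else \<beta> i)" by simp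
      also have "\<dots> = (\<Prod>p\<in>{1..<N}. \<beta> p)" by (intro prod.cong) auto
      finally show ?thesis .
    qed
    finally show ?thesis .
  qed
  have detD: "Determinant.det Dg = (\<Prod>j<N. J j)"
  proof -
    have "Determinant.det Dg = prod_list (diag_mat Dg)"
      by (rule det_lower_triangular[OF _ Dc]) (auto simp: Dg_def)
    also have "\<dots> = (\<Prod>i=0..<N. Dg $$ (i,i))" by (simp add: prod_list_diag_prod Dg_def)
    also have "\<dots> = (\<Prod>j<N. J j)" by (simp add: Dg_def atLeast0LessThan)
    finally show ?thesis .
  qed
  have "Determinant.det (mat N N (\<lambda>(p,j). Y p j)) = Determinant.det (L * XM) * Determinant.det Dg"
    unfolding YM by (rule det_mult[OF mult_carrier_mat[OF Lc Xc] Dc])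
  also have "\<dots> = Determinant.det L * Determinant.det XM * Determinant.det Dg"
    by (simp add: det_mult[OF Lc Xc])
  finally show ?thesis unfolding detL detD XM_def by (simp add: mult_ac)
qed

lemma goodg_of:
  assumes K: "is_subfield K" and tr: "totally_real K" and en: "enumerates_embeddings K n \<sigma>"
    and g: "in_SL2 (ring_of_integers K) a b c d"
  shows "goodg n \<sigma> a b c d"
  unfolding goodg_def
proof (intro ballI)
  fix i assume i: "i \<in> {1..n}"
  have emb: "is_embedding K (\<sigma> i)" using en i unfolding enumerates_embeddings_def by blast
  have inK: "a \<in> K" "b \<in> K" "c \<in> K" "d \<in> K" and det: "a * d - b * c = 1"
    using g unfolding in_SL2_def ring_of_integers_def by auto
  have re: "Im (\<sigma> i x) = 0" if "x \<in> K" for x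
    using tr emb that unfolding totally_real_def by (simp add: complex_is_Real_iff)
  have bcK: "b * c \<in> K" and oneK: "1 \<in> K" using K inK unfolding is_subfield_def by auto
  have "a * d = b * c + 1" using det by (simp add: algebra_simps)
  then have "\<sigma> i (a * d) = \<sigma> i (b * c + 1)" by simp
  also have "\<dots> = \<sigma> i (b * c) + \<sigma> i 1" using emb bcK oneK unfolding is_embedding_def by blast
  also have "\<dots> = \<sigma> i b * \<sigma> i c + 1" using emb inK unfolding is_embedding_def by auto
  finally have "\<sigma> i a * \<sigma> i d = \<sigma> i b * \<sigma> i c + 1" using emb inK unfolding is_embedding_def by auto
  then show "Im (\<sigma> i a) = 0 \<and> Im (\<sigma> i b) = 0 \<and> Im (\<sigma> i c) = 0 \<and> Im (\<sigma> i d) = 0 \<and> \<sigma> i a * \<sigma> i d - \<sigma> i b * \<sigma> i c = 1"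
    using re inK by simp
qed

lemma power_int_sum:
  fixes x :: complex
  assumes "x \<noteq> 0" "finite S"
  shows "(\<Prod>j\<in>S. x powi g j) = x powi (\<Sum>j\<in>S. g j)"
  using assms(2) by (induction S rule: finite_induct) (auto simp: power_int_add assms(1))



theorem mainTheorem15:
  fixes K :: "complex set" and n m :: nat and \<sigma> :: "nat \<Rightarrow> complex \<Rightarrow> complex"
    and F :: "nat \<Rightarrow> (nat \<Rightarrow> complex) \<Rightarrow> complex" and r :: "nat \<Rightarrow> int"
  assumes "number_field_of_degree K n"
    and "totally_real K"
    and "principal_ring (ring_of_integers K)"
    and "enumerates_embeddings K n \<sigma>"
    and "1 \<le> m" and "m \<le> n"
    and "\<forall>j\<in>{1..m+1}. \<exists>f. hilbert_modular_form K n \<sigma> f (F j) \<and> parallel_weight_on {1..m} f (r j)"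
  shows "\<exists>f. hilbert_modular_form K n \<sigma> f (bracket m r F)
             \<and> parallel_weight_on {1..m} f ((\<Sum>j=1..m+1. r j) + 2)"
proof -
  have K: "is_subfield K" using assms(1) unfolding number_field_of_degree_def by blast
  obtain fw where fw: "\<forall>j\<in>{1..m+1}. hilbert_modular_form K n \<sigma> (fw j) (F j) \<and> parallel_weight_on {1..m} (fw j) (r j)"
    using bchoice[OF assms(7)] by blast
  have HF: "holomorphic_on_Hn n (F j)" if "j \<in> {1..m+1}" for j
    using fw that unfolding hilbert_modular_form_def by blast
  have MF: "\<forall>a b c d. in_SL2 (ring_of_integers K) a b c d \<longrightarrow>
       (\<forall>z\<in>upper_half_space n. F j (moebius_action n \<sigma> a b c d z) =
            (\<Prod>i=1..n. (\<sigma> i c * z i + \<sigma> i d) powi fw j i) * F j z)" if "j \<in> {1..m+1}" for j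
    using fw that unfolding hilbert_modular_form_def by blast
  have PW: "fw j i = r j" if "j \<in> {1..m+1}" "i \<in> {1..m}" for j i
    using fw that unfolding parallel_weight_on_def by blast
  define f' where "f' = (\<lambda>i. (\<Sum>j=1..m+1. fw j i) + (if i \<in> {1..m} then 2 else 0))"
  define E where "E = (\<lambda>a b z. if a = 0 then of_int (r (b+1)) * F (b+1) z else partial_z a (F (b+1)) z)"
  have br: "bracket m r F = (\<lambda>z. Determinant.det (mat (m+1) (m+1) (\<lambda>(a,b). E a b z)))"
    unfolding bracket_def E_def by (simp add: fun_eq_iff)
  have hol: "holomorphic_on_Hn n (bracket m r F)"
    unfolding br
  proof (rule holo_det)
    fix a b assume a: "a < m + 1" and b: "b < m + 1"
    then have b1: "b + 1 \<in> {1..m+1}" by simp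
    show "holomorphic_on_Hn n (E a b)"
    proof (cases "a = 0")
      case True
      then have "E a b = (\<lambda>z. of_int (r (b+1)) * F (b+1) z)" by (simp add: E_def fun_eq_iff)
      then show ?thesis using holo_cmult[OF HF[OF b1]] by simp
    next
      case False
      then have "E a b = partial_z a (F (b+1))" by (simp add: E_def fun_eq_iff)
      moreover have "a \<in> {1..n}" using False a assms(6) by auto
      ultimately show ?thesis using holo_partial[OF HF[OF b1]] by simp
    qed
  qed
  have modular: "\<forall>a b c d. in_SL2 (ring_of_integers K) a b c d \<longrightarrow>
       (\<forall>z\<in>upper_half_space n. bracket m r F (moebius_action n \<sigma> a b c d z) =
            (\<Prod>i=1..n. (\<sigma> i c * z i + \<sigma> i d) powi f' i) * bracket m r F z)"
  proof (intro allI impI ballI)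
    fix a b c d z assume g0: "in_SL2 (ring_of_integers K) a b c d" and z: "z \<in> upper_half_space n"
    have g: "goodg n \<sigma> a b c d" by (rule goodg_of[OF K assms(2) assms(4) g0])
    define e where "e = (\<lambda>i. \<sigma> i c * z i + \<sigma> i d)"
    define J where "J = (\<lambda>j. (\<Prod>i=1..n. e i powi fw (j+1) i))"
    define mz where "mz = moebius_action n \<sigma> a b c d z"
    have enz: "e i \<noteq> 0" if "i \<in> {1..n}" for i unfolding e_def by (rule goodg_e_nz[OF g z that])
    have "bracket m r F mz = (\<Prod>p\<in>{1..<m+1}. (e p)^2) * (\<Prod>j<m+1. J j) * bracket m r F z"
      unfolding br
    proof (rule det_transform[where J=J and \<alpha> = "\<lambda>p. \<sigma> p c * e p" and \<beta> = "\<lambda>p. (e p)^2"])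
      fix j assume j: "j < m + 1"
      then have j1: "j + 1 \<in> {1..m+1}" by simp
      have "F (j+1) mz = J j * F (j+1) z" using MF[OF j1] g0 z unfolding mz_def J_def e_def by blast
      then show "E 0 j mz = J j * E 0 j z" by (simp add: E_def)
    next
      fix p j assume p0: "0 < p" and p: "p < m + 1" and j: "j < m + 1"
      then have j1: "j + 1 \<in> {1..m+1}" by simp
      have pn: "p \<in> {1..n}" using p0 p assms(6) by auto
      have pm: "p \<in> {1..m}" using p0 p by auto
      have md: "\<forall>z\<in>upper_half_space n. F (j+1) (moebius_action n \<sigma> a b c d z) =
            (\<Prod>i=1..n. (\<sigma> i c * z i + \<sigma> i d) powi fw (j+1) i) * F (j+1) z"
        using MF[OF j1] g0 by blast
      have "partial_z p (F (j+1)) mz = J j * (of_int (fw (j+1) p) * \<sigma> p c * e p * F (j+1) z + (e p)^2 * partial_z p (F (j+1)) z)"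
        using deriv_transform[OF HF[OF j1] md g pn z] unfolding mz_def J_def e_def .
      then show "E p j mz = J j * (\<sigma> p c * e p * E 0 j z + (e p)^2 * E p j z)"
        using p0 PW[OF j1 pm] by (simp add: E_def algebra_simps)
    qed
    also have "(\<Prod>p\<in>{1..<m+1}. (e p)^2) * (\<Prod>j<m+1. J j) = (\<Prod>i=1..n. e i powi f' i)"
    proof -
      have s1: "(\<Prod>j<m+1. J j) = (\<Prod>j\<in>{1..m+1}. \<Prod>i=1..n. e i powi fw j i)"
        unfolding J_def
        by (rule prod.reindex_bij_witness[where i="\<lambda>j. j - 1" and j="Suc"]) auto
      also have "\<dots> = (\<Prod>i=1..n. \<Prod>j\<in>{1..m+1}. e i powi fw j i)" by (rule prod.swap)
      also have "\<dots> = (\<Prod>i=1..n. e i powi (\<Sum>j=1..m+1. fw j i))"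
        using enz by (intro prod.cong refl power_int_sum) auto
      finally have s1: "(\<Prod>j<m+1. J j) = (\<Prod>i=1..n. e i powi (\<Sum>j=1..m+1. fw j i))" .
      have "(\<Prod>i=1..n. e i powi (if i \<in> {1..m} then 2 else 0)) = (\<Prod>i=1..n. if i \<in> {1..m} then (e i)^2 else 1)"
        by (intro prod.cong) auto
      also have "\<dots> = (\<Prod>i\<in>{1..n} \<inter> {1..m}. (e i)^2)" by (rule prod.inter_restrict[symmetric]) simp
      also have "{1..n} \<inter> {1..m} = {1..<m+1}" using assms(6) by auto
      finally have s2: "(\<Prod>p\<in>{1..<m+1}. (e p)^2) = (\<Prod>i=1..n. e i powi (if i \<in> {1..m} then 2 else 0))" by simp
      have "(\<Prod>p\<in>{1..<m+1}. (e p)^2) * (\<Prod>j<m+1. J j)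
          = (\<Prod>i=1..n. e i powi (\<Sum>j=1..m+1. fw j i) * e i powi (if i \<in> {1..m} then 2 else 0))"
        unfolding s1 s2 by (simp add: prod.distrib mult.commute)
      also have "\<dots> = (\<Prod>i=1..n. e i powi f' i)"
        unfolding f'_def using enz by (intro prod.cong refl) (simp add: power_int_add)
      finally show ?thesis .
    qed
    finally show "bracket m r F (moebius_action n \<sigma> a b c d z) =
            (\<Prod>i=1..n. (\<sigma> i c * z i + \<sigma> i d) powi f' i) * bracket m r F z"
      unfolding mz_def e_def .
  qed
  have par: "parallel_weight_on {1..m} f' ((\<Sum>j=1..m+1. r j) + 2)"
    unfolding parallel_weight_on_def f'_def
  proof
    fix i assume i: "i \<in> {1..m}"
    have "(\<Sum>j=1..m+1. fw j i) = (\<Sum>j=1..m+1. r j)" using PW i by (intro sum.cong) auto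
    then show "(\<Sum>j=1..m+1. fw j i) + (if i \<in> {1..m} then 2 else 0) = (\<Sum>j=1..m+1. r j) + 2" using i by simp
  qed
  show ?thesis using hol modular par unfolding hilbert_modular_form_def by blast
qed


end
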